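(* Let $P:\mathcal C^{op}\to\mathbf{MSLat}$ be a primary doctrine and $S\in\mathfrak I_{\mathrm{Fr}}(P)(c)$. Then $S=\exists_f\eta^P_d(x)$ for some morphism $f:d\to c$ of $\mathcal C$ and some $x\in P(d)$ (where $\exists_f$ is the left adjoint of $\mathfrak I_{\mathrm{Fr}}(P)(f)$) if and only if the object $(c,S)$ is supercompact in the site $(\mathcal C\rtimes\mathfrak I_{\mathrm{Fr}}(P),K_{\mathfrak I_{\mathrm{Fr}}(P)})$, i.e. every $K_{\mathfrak I_{\mathrm{Fr}}(P)}$-covering sieve on $(c,S)$ contains a single morphism which by itself generates a covering sieve.
   Context: $\mathbf{MSLat}$: meet-semilattices with top and finite-meet-preserving maps; a primary doctrine is $P:\mathcal C^{op}\to\mathbf{MSLat}$ with $\mathcal C$ having finite limits. For a doctrine $Q$, $\mathcal C\rtimes Q$ has objects $(c,x)$, $x\in Q(c)$, morphisms $f:(c,x)\to(d,y)$ the $f:c\to d$ with $x\le Q(f)(y)$. Free geometric completion $\mathfrak I_{\mathrm{Fr}}(P):\mathcal C^{op}\to\mathbf{Frm}$: $\mathfrak I_{\mathrm{Fr}}(P)(c)$ is the set, ordered by inclusion, of sets $S$ of pairs $(f,x)$ with $f:d\to c$ in $\mathcal C$, $x\in P(d)$, such that $(f,x)\in S$, $g:e\to d$, $y\in P(e)$, $y\le P(g)(x)$ imply $(f\circ g,y)\in S$; for $f:d\to c$, $\mathfrak I_{\mathrm{Fr}}(P)(f)(S)=\{(g,y):(f\circ g,y)\in S\}$, which has a left adjoint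 $\exists_f$ (explicitly $\exists_f(T)=\{(f\circ g,y):(g,y)\in T\}$). The unit is $\eta^P_c(x)=\{(g,y):g:e\to c,\ y\in P(e),\ y\le P(g)(x)\}$. $K_{\mathfrak I_{\mathrm{Fr}}(P)}$ is the topology on $\mathcal C\rtimes\mathfrak I_{\mathrm{Fr}}(P)$ in which $\{f_i:(c_i,U_i)\to(d,V)\}$ covers iff $V=\bigcup_i\exists_{f_i}U_i$. *)

theory Defs
  imports Main
begin

record ('o, 'm) cat =
  Ob   :: "'o set"
  Mor  :: "'m set"
  cdom :: "'m \<Rightarrow> 'o"
  ccod :: "'m \<Rightarrow> 'o"
  idm  :: "'o \<Rightarrow> 'm"
  comp :: "'m \<Rightarrow> 'm \<Rightarrow> 'm"   (* comp f g = f \<circ> g *)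

definition hom :: "('o, 'm) cat \<Rightarrow> 'o \<Rightarrow> 'o \<Rightarrow> 'm set" where
  "hom C a b = {f \<in> Mor C. cdom C f = a \<and> ccod C f = b}"

definition category :: "('o, 'm) cat \<Rightarrow> bool" where
  "category C \<longleftrightarrow>
     (\<forall>f\<in>Mor C. cdom C f \<in> Ob C \<and> ccod C f \<in> Ob C) \<and>
     (\<forall>a\<in>Ob C. idm C a \<in> hom C a a) \<and>
     (\<forall>f\<in>Mor C. \<forall>g\<in>Mor C. ccod C g = cdom C f \<longrightarrow>
         comp C f g \<in> hom C (cdom C g) (ccod C f)) \<and>
     (\<forall>f\<in>Mor C. comp C f (idm C (cdom C f)) = f \<and> comp C (idm C (ccod C f)) f = f) \<and>
     (\<forall>f\<in>Mor C. \<forall>g\<in>Mor C. \<forall>h\<in>Mor C. ccod C h = cdom C g \<longrightarrow> ccod C g = cdom C f \<longrightarrow>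
         comp C f (comp C g h) = comp C (comp C f g) h)"

definition has_terminal :: "('o, 'm) cat \<Rightarrow> bool" where
  "has_terminal C \<longleftrightarrow> (\<exists>t\<in>Ob C. \<forall>a\<in>Ob C. \<exists>!u. u \<in> hom C a t)"

definition has_pullbacks :: "('o, 'm) cat \<Rightarrow> bool" where
  "has_pullbacks C \<longleftrightarrow>
     (\<forall>a\<in>Ob C. \<forall>b\<in>Ob C. \<forall>c\<in>Ob C. \<forall>f\<in>hom C a c. \<forall>g\<in>hom C b c.
        \<exists>p\<in>Ob C. \<exists>p1\<in>hom C p a. \<exists>p2\<in>hom C p b. comp C f p1 = comp C g p2 \<and>
          (\<forall>q\<in>Ob C. \<forall>q1\<in>hom C q a. \<forall>q2\<in>hom C q b. comp C f q1 = comp C g q2 \<longrightarrow>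
             (\<exists>!u. u \<in> hom C q p \<and> comp C p1 u = q1 \<and> comp C p2 u = q2)))"

definition finitely_complete :: "('o, 'm) cat \<Rightarrow> bool" where
  "finitely_complete C \<longleftrightarrow> category C \<and> has_terminal C \<and> has_pullbacks C"

record ('m, 'p, 'o) doctrine =
  PC   :: "'o \<Rightarrow> 'p set"              (* carrier of P(c) *)
  ple  :: "'o \<Rightarrow> 'p \<Rightarrow> 'p \<Rightarrow> bool"
  Pmap :: "'m \<Rightarrow> 'p \<Rightarrow> 'p"           (* P(f) : P(cod f) \<rightarrow> P(dom f) *)

definition mslat :: "'p set \<Rightarrow> ('p \<Rightarrow> 'p \<Rightarrow> bool) \<Rightarrow> bool" where
  "mslat A le \<longleftrightarrow>
     (\<forall>x\<in>A. le x x) \<and>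
     (\<forall>x\<in>A. \<forall>y\<in>A. \<forall>z\<in>A. le x y \<longrightarrow> le y z \<longrightarrow> le x z) \<and>
     (\<forall>x\<in>A. \<forall>y\<in>A. le x y \<longrightarrow> le y x \<longrightarrow> x = y) \<and>
     (\<exists>t\<in>A. \<forall>x\<in>A. le x t) \<and>
     (\<forall>x\<in>A. \<forall>y\<in>A. \<exists>m\<in>A. le m x \<and> le m y \<and> (\<forall>z\<in>A. le z x \<longrightarrow> le z y \<longrightarrow> le z m))"

definition is_top :: "'p set \<Rightarrow> ('p \<Rightarrow> 'p \<Rightarrow> bool) \<Rightarrow> 'p \<Rightarrow> bool" where
  "is_top A le t \<longleftrightarrow> t \<in> A \<and> (\<forall>x\<in>A. le x t)"

definition is_meet :: "'p set \<Rightarrow> ('p \<Rightarrow> 'p \<Rightarrow> bool) \<Rightarrow> 'p \<Rightarrow> 'p \<Rightarrow> 'p \<Rightarrow> bool" where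
  "is_meet A le x y m \<longleftrightarrow> m \<in> A \<and> le m x \<and> le m y \<and> (\<forall>z\<in>A. le z x \<longrightarrow> le z y \<longrightarrow> le z m)"

definition mslat_hom ::
  "'p set \<Rightarrow> ('p \<Rightarrow> 'p \<Rightarrow> bool) \<Rightarrow> 'p set \<Rightarrow> ('p \<Rightarrow> 'p \<Rightarrow> bool) \<Rightarrow> ('p \<Rightarrow> 'p) \<Rightarrow> bool" where
  "mslat_hom A leA B leB h \<longleftrightarrow>
     (\<forall>x\<in>A. h x \<in> B) \<and>
     (\<forall>t. is_top A leA t \<longrightarrow> is_top B leB (h t)) \<and>
     (\<forall>x\<in>A. \<forall>y\<in>A. \<forall>m. is_meet A leA x y m \<longrightarrow> is_meet B leB (h x) (h y) (h m))"

definition primary_doctrine :: "('o, 'm) cat \<Rightarrow> ('m, 'p, 'o) doctrine \<Rightarrow> bool" where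
  "primary_doctrine C P \<longleftrightarrow>
     finitely_complete C \<and>
     (\<forall>a\<in>Ob C. mslat (PC P a) (ple P a)) \<and>
     (\<forall>f\<in>Mor C. mslat_hom (PC P (ccod C f)) (ple P (ccod C f))
                           (PC P (cdom C f)) (ple P (cdom C f)) (Pmap P f)) \<and>
     (\<forall>a\<in>Ob C. \<forall>x\<in>PC P a. Pmap P (idm C a) x = x) \<and>
     (\<forall>f\<in>Mor C. \<forall>g\<in>Mor C. ccod C g = cdom C f \<longrightarrow>
        (\<forall>x\<in>PC P (ccod C f). Pmap P (comp C f g) x = Pmap P g (Pmap P f x)))"

definition IFr :: "('o, 'm) cat \<Rightarrow> ('m, 'p, 'o) doctrine \<Rightarrow> 'o \<Rightarrow> ('m \<times> 'p) set set" where
  "IFr C P c = {S. S \<subseteq> {(f, x). f \<in> Mor C \<and> ccod C f = c \<and> x \<in> PC P (cdom C f)} \<and>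
      (\<forall>f x g y. (f, x) \<in> S \<longrightarrow> g \<in> Mor C \<longrightarrow> ccod C g = cdom C f \<longrightarrow>
          y \<in> PC P (cdom C g) \<longrightarrow> ple P (cdom C g) y (Pmap P g x) \<longrightarrow> (comp C f g, y) \<in> S)}"

text \<open>Reindexing IFr(P)(f) and its left adjoint \<exists>_f (explicit form).\<close>
definition IFr_map :: "('o, 'm) cat \<Rightarrow> 'm \<Rightarrow> ('m \<times> 'p) set \<Rightarrow> ('m \<times> 'p) set" where
  "IFr_map C f S = {(g, y). (comp C f g, y) \<in> S}"

definition IFr_ex :: "('o, 'm) cat \<Rightarrow> 'm \<Rightarrow> ('m \<times> 'p) set \<Rightarrow> ('m \<times> 'p) set" where
  "IFr_ex C f T = {(comp C f g, y) | g y. (g, y) \<in> T}"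

definition eta :: "('o, 'm) cat \<Rightarrow> ('m, 'p, 'o) doctrine \<Rightarrow> 'o \<Rightarrow> 'p \<Rightarrow> ('m \<times> 'p) set" where
  "eta C P c x = {(g, y). g \<in> Mor C \<and> ccod C g = c \<and> y \<in> PC P (cdom C g) \<and>
                          ple P (cdom C g) y (Pmap P g x)}"

text \<open>Arrows (d,U) \<rightarrow> (c,V) in C \<rtimes> IFr(P); an arrow into a fixed target is
  represented by the triple (d, U, f) of its source object and underlying morphism.\<close>
definition sd_arrow :: "('o, 'm) cat \<Rightarrow> ('m, 'p, 'o) doctrine \<Rightarrow>
    'o \<Rightarrow> ('m \<times> 'p) set \<Rightarrow> 'm \<Rightarrow> 'o \<Rightarrow> ('m \<times> 'p) set \<Rightarrow> bool" where
  "sd_arrow C P d U f c V \<longleftrightarrow> d \<in> Ob C \<and> c \<in> Ob C \<and> U \<in> IFr C P d \<and> V \<in> IFr C P c \<and>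
     f \<in> hom C d c \<and> U \<subseteq> IFr_map C f V"

definition sieve :: "('o, 'm) cat \<Rightarrow> ('m, 'p, 'o) doctrine \<Rightarrow> 'o \<Rightarrow> ('m \<times> 'p) set \<Rightarrow>
    ('o \<times> ('m \<times> 'p) set \<times> 'm) set \<Rightarrow> bool" where
  "sieve C P c S R \<longleftrightarrow>
     (\<forall>(d, U, f)\<in>R. sd_arrow C P d U f c S) \<and>
     (\<forall>(d, U, f)\<in>R. \<forall>e W g. sd_arrow C P e W g d U \<longrightarrow> (e, W, comp C f g) \<in> R)"

definition K_covers :: "('o, 'm) cat \<Rightarrow> ('m \<times> 'p) set \<Rightarrow>
    ('o \<times> ('m \<times> 'p) set \<times> 'm) set \<Rightarrow> bool" where
  "K_covers C S R \<longleftrightarrow> S = (\<Union>(d, U, f)\<in>R. IFr_ex C f U)"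

definition gen_sieve :: "('o, 'm) cat \<Rightarrow> ('m, 'p, 'o) doctrine \<Rightarrow>
    'o \<Rightarrow> ('m \<times> 'p) set \<Rightarrow> 'm \<Rightarrow> ('o \<times> ('m \<times> 'p) set \<times> 'm) set" where
  "gen_sieve C P d U f = {(e, W, comp C f g) | e W g. sd_arrow C P e W g d U}"

definition supercompact :: "('o, 'm) cat \<Rightarrow> ('m, 'p, 'o) doctrine \<Rightarrow> 'o \<Rightarrow> ('m \<times> 'p) set \<Rightarrow> bool" where
  "supercompact C P c S \<longleftrightarrow>
     (\<forall>R. sieve C P c S R \<longrightarrow> K_covers C S R \<longrightarrow>
        (\<exists>(d, U, f)\<in>R. K_covers C S (gen_sieve C P d U f)))"

end

theory Submission
  imports Defs
begin

locale pd =
  fixes C :: "('o, 'm) cat" and P :: "('m, 'p, 'o) doctrine"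
  assumes prim: "primary_doctrine C P"
begin

lemma cat: "category C"
  using prim unfolding primary_doctrine_def finitely_complete_def by blast

lemma comp_mor: "f \<in> Mor C \<Longrightarrow> g \<in> Mor C \<Longrightarrow> ccod C g = cdom C f \<Longrightarrow>
   comp C f g \<in> Mor C \<and> cdom C (comp C f g) = cdom C g \<and> ccod C (comp C f g) = ccod C f"
  using cat unfolding category_def hom_def by blast

lemma id_mor: "a \<in> Ob C \<Longrightarrow> idm C a \<in> Mor C \<and> cdom C (idm C a) = a \<and> ccod C (idm C a) = a"
  using cat unfolding category_def hom_def by blast

lemma dom_ob: "f \<in> Mor C \<Longrightarrow> cdom C f \<in> Ob C \<and> ccod C f \<in> Ob C"
  using cat unfolding category_def by blast

lemma id_r: "f \<in> Mor C \<Longrightarrow> comp C f (idm C (cdom C f)) = f"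
  using cat unfolding category_def by blast

lemma id_l: "f \<in> Mor C \<Longrightarrow> comp C (idm C (ccod C f)) f = f"
  using cat unfolding category_def by blast

lemma assoc: "f \<in> Mor C \<Longrightarrow> g \<in> Mor C \<Longrightarrow> h \<in> Mor C \<Longrightarrow> ccod C h = cdom C g \<Longrightarrow>
   ccod C g = cdom C f \<Longrightarrow> comp C f (comp C g h) = comp C (comp C f g) h"
  using cat unfolding category_def by blast

lemma mslat_a: "a \<in> Ob C \<Longrightarrow> mslat (PC P a) (ple P a)"
  using prim unfolding primary_doctrine_def by blast

lemma refl: "a \<in> Ob C \<Longrightarrow> x \<in> PC P a \<Longrightarrow> ple P a x x"
  using mslat_a unfolding mslat_def by blast

lemma trans: "a \<in> Ob C \<Longrightarrow> x \<in> PC P a \<Longrightarrow> y \<in> PC P a \<Longrightarrow> z \<in> PC P a \<Longrightarrow>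
   ple P a x y \<Longrightarrow> ple P a y z \<Longrightarrow> ple P a x z"
  using mslat_a unfolding mslat_def by blast

lemma pmap_hom: "f \<in> Mor C \<Longrightarrow> mslat_hom (PC P (ccod C f)) (ple P (ccod C f))
                           (PC P (cdom C f)) (ple P (cdom C f)) (Pmap P f)"
  using prim unfolding primary_doctrine_def by blast

lemma pmap_in: "f \<in> Mor C \<Longrightarrow> x \<in> PC P (ccod C f) \<Longrightarrow> Pmap P f x \<in> PC P (cdom C f)"
  using pmap_hom unfolding mslat_hom_def by blast

lemma pmap_mono: assumes f: "f \<in> Mor C" and x: "x \<in> PC P (ccod C f)" and y: "y \<in> PC P (ccod C f)"
  and le: "ple P (ccod C f) y x"
  shows "ple P (cdom C f) (Pmap P f y) (Pmap P f x)"
proof -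
  have ob: "ccod C f \<in> Ob C" using dom_ob f by blast
  have "is_meet (PC P (ccod C f)) (ple P (ccod C f)) y x y"
    unfolding is_meet_def using refl[OF ob y] le y by blast
  then have "is_meet (PC P (cdom C f)) (ple P (cdom C f)) (Pmap P f y) (Pmap P f x) (Pmap P f y)"
    using pmap_hom[OF f] x y unfolding mslat_hom_def by blast
  then show ?thesis unfolding is_meet_def by blast
qed

lemma pmap_id: "a \<in> Ob C \<Longrightarrow> x \<in> PC P a \<Longrightarrow> Pmap P (idm C a) x = x"
  using prim unfolding primary_doctrine_def by blast

lemma pmap_comp: "f \<in> Mor C \<Longrightarrow> g \<in> Mor C \<Longrightarrow> ccod C g = cdom C f \<Longrightarrow>
   x \<in> PC P (ccod C f) \<Longrightarrow> Pmap P (comp C f g) x = Pmap P g (Pmap P f x)"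
  using prim unfolding primary_doctrine_def by blast

lemma IFr_elem: "S \<in> IFr C P c \<Longrightarrow> (m, z) \<in> S \<Longrightarrow> m \<in> Mor C \<and> ccod C m = c \<and> z \<in> PC P (cdom C m)"
  unfolding IFr_def by blast

lemma IFr_down: "S \<in> IFr C P c \<Longrightarrow> (f, x) \<in> S \<Longrightarrow> g \<in> Mor C \<Longrightarrow> ccod C g = cdom C f \<Longrightarrow>
   y \<in> PC P (cdom C g) \<Longrightarrow> ple P (cdom C g) y (Pmap P g x) \<Longrightarrow> (comp C f g, y) \<in> S"
  unfolding IFr_def by blast

lemma eta_IFr: assumes d: "d \<in> Ob C" and x: "x \<in> PC P d" shows "eta C P d x \<in> IFr C P d"
  unfolding IFr_def
proof (intro CollectI conjI allI impI)
  show "eta C P d x \<subseteq> {(f, x). f \<in> Mor C \<and> ccod C f = d \<and> x \<in> PC P (cdom C f)}"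
    unfolding eta_def by blast
next
  fix f y g z
  assume fy: "(f, y) \<in> eta C P d x" and g: "g \<in> Mor C" and gc: "ccod C g = cdom C f"
    and z: "z \<in> PC P (cdom C g)" and le: "ple P (cdom C g) z (Pmap P g y)"
  from fy have f: "f \<in> Mor C" "ccod C f = d" "y \<in> PC P (cdom C f)" "ple P (cdom C f) y (Pmap P f x)"
    unfolding eta_def by auto
  have fx: "Pmap P f x \<in> PC P (cdom C f)" using pmap_in f x by blast
  have m: "ple P (cdom C g) (Pmap P g y) (Pmap P g (Pmap P f x))"
    using pmap_mono[OF g] gc f fx by auto
  have c: "comp C f g \<in> Mor C \<and> cdom C (comp C f g) = cdom C g \<and> ccod C (comp C f g) = d"
    using comp_mor[OF f(1) g gc] f by auto
  have pc: "Pmap P (comp C f g) x = Pmap P g (Pmap P f x)"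
    using pmap_comp[OF f(1) g gc] f x by auto
  have ob: "cdom C g \<in> Ob C" using dom_ob g by blast
  have "ple P (cdom C g) z (Pmap P g (Pmap P f x))"
    using trans[OF ob z _ _ le m] pmap_in g gc f fx by auto
  then show "(comp C f g, z) \<in> eta C P d x"
    unfolding eta_def using c z pc by auto
qed

lemma eta_self: "d \<in> Ob C \<Longrightarrow> x \<in> PC P d \<Longrightarrow> (idm C d, x) \<in> eta C P d x"
  unfolding eta_def using id_mor pmap_id refl by auto

end

lemma (in pd) forward:
  assumes c: "c \<in> Ob C" and S: "S \<in> IFr C P c"
    and f: "f \<in> hom C d c" and x: "x \<in> PC P d" and Sdef: "S = IFr_ex C f (eta C P d x)"
  shows "supercompact C P c S"
  unfolding supercompact_def
proof (intro allI impI)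
  fix R assume R: "sieve C P c S R" and cov: "K_covers C S R"
  have fm: "f \<in> Mor C" "cdom C f = d" "ccod C f = c" using f unfolding hom_def by auto
  have d: "d \<in> Ob C" using dom_ob fm by auto
  have "(comp C f (idm C d), x) \<in> S" unfolding Sdef IFr_ex_def using eta_self[OF d x] by blast
  then have "(f, x) \<in> S" using id_r fm by auto
  then obtain e U g where eUg: "(e, U, g) \<in> R" and fxU: "(f, x) \<in> IFr_ex C g U"
    using cov unfolding K_covers_def by blast
  then obtain h where hU: "(h, x) \<in> U" and gh: "comp C g h = f"
    unfolding IFr_ex_def by blast
  have sa: "sd_arrow C P e U g c S" using R eUg unfolding sieve_def by blast
  then have e: "e \<in> Ob C" and U: "U \<in> IFr C P e" and gm: "g \<in> Mor C" "cdom C g = e" "ccod C g = c"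
    and UsubS: "U \<subseteq> IFr_map C g S"
    unfolding sd_arrow_def hom_def by auto
  have hm: "h \<in> Mor C" "ccod C h = e" using IFr_elem[OF U hU] by auto
  have hd: "cdom C h = d" using comp_mor[OF gm(1) hm(1)] gm hm gh fm by auto
  have exU_S: "IFr_ex C g U \<subseteq> S" using UsubS unfolding IFr_ex_def IFr_map_def by blast
  have idsa: "sd_arrow C P e U (idm C e) e U"
    unfolding sd_arrow_def hom_def IFr_map_def
    using e U id_mor[OF e] id_l IFr_elem[OF U] by fastforce
  have gid: "comp C g (idm C e) = g" using id_r gm by auto
  show "\<exists>(d, U, f)\<in>R. K_covers C S (gen_sieve C P d U f)"
  proof (rule bexI[OF _ eUg], simp only: case_prod_conv K_covers_def, rule equalityI)
    show "S \<subseteq> (\<Union>(d', U', f')\<in>gen_sieve C P e U g. IFr_ex C f' U')"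
    proof
      fix p assume "p \<in> S"
      then obtain k y where p: "p = (comp C f k, y)" and ky: "(k, y) \<in> eta C P d x"
        unfolding Sdef IFr_ex_def by blast
      from ky have k: "k \<in> Mor C" "ccod C k = d" "y \<in> PC P (cdom C k)" "ple P (cdom C k) y (Pmap P k x)"
        unfolding eta_def by auto
      have "(comp C h k, y) \<in> U" using IFr_down[OF U hU k(1)] k hd by auto
      then have "(comp C g (comp C h k), y) \<in> IFr_ex C g U" unfolding IFr_ex_def by blast
      moreover have "comp C g (comp C h k) = comp C f k"
        using assoc[OF gm(1) hm(1) k(1)] k hd hm gm gh by auto
      moreover have "(e, U, g) \<in> gen_sieve C P e U g"
        unfolding gen_sieve_def using idsa gid by force
      ultimately show "p \<in> (\<Union>(d', U', f')\<in>gen_sieve C P e U g. IFr_ex C f' U')"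
        using p by force
    qed
  next
    show "(\<Union>(d', U', f')\<in>gen_sieve C P e U g. IFr_ex C f' U') \<subseteq> S"
    proof
      fix p assume "p \<in> (\<Union>(d', U', f')\<in>gen_sieve C P e U g. IFr_ex C f' U')"
      then obtain e' W k where sk: "sd_arrow C P e' W k e U" and pW: "p \<in> IFr_ex C (comp C g k) W"
        unfolding gen_sieve_def by blast
      from sk have W: "W \<in> IFr C P e'" and km: "k \<in> Mor C" "ccod C k = e"
        and WU: "W \<subseteq> IFr_map C k U" unfolding sd_arrow_def hom_def by auto
      from pW obtain m z where p: "p = (comp C (comp C g k) m, z)" and mz: "(m, z) \<in> W"
        unfolding IFr_ex_def by blast
      have mm: "m \<in> Mor C" "ccod C m = e'" using IFr_elem[OF W mz] by auto
      have "cdom C k = e'" using sk unfolding sd_arrow_def hom_def by auto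
      then have eq: "comp C (comp C g k) m = comp C g (comp C k m)"
        using assoc[OF gm(1) km(1) mm(1)] km mm gm by auto
      have "(comp C k m, z) \<in> U" using WU mz unfolding IFr_map_def by blast
      then have "p \<in> IFr_ex C g U" unfolding IFr_ex_def p eq by blast
      then show "p \<in> S" using exU_S by blast
    qed
  qed
qed

lemma (in pd) backward:
  assumes c: "c \<in> Ob C" and S: "S \<in> IFr C P c" and sc: "supercompact C P c S"
  shows "\<exists>d f x. f \<in> hom C d c \<and> x \<in> PC P d \<and> S = IFr_ex C f (eta C P d x)"
proof -
  define R where "R = {(e, W, h). sd_arrow C P e W h c S \<and>
     (\<exists>d f x. f \<in> hom C d c \<and> x \<in> PC P d \<and> IFr_ex C h W \<subseteq> IFr_ex C f (eta C P d x)
          \<and> IFr_ex C f (eta C P d x) \<subseteq> S)}"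
  have exsub: "IFr_ex C h W \<subseteq> S" if "sd_arrow C P e W h c S" for e W h
    using that unfolding sd_arrow_def IFr_ex_def IFr_map_def by blast
  have A: "sd_arrow C P e W h c S" if "(e, W, h) \<in> R" for e W h
    using that unfolding R_def by blast
  have B: "(e', W', comp C h k) \<in> R" if t: "(e, W, h) \<in> R" and sk: "sd_arrow C P e' W' k e W"
    for e W h e' W' k
  proof -
    have sa: "sd_arrow C P e W h c S" and ex: "\<exists>d f x. f \<in> hom C d c \<and> x \<in> PC P d \<and> IFr_ex C h W \<subseteq> IFr_ex C f (eta C P d x)
          \<and> IFr_ex C f (eta C P d x) \<subseteq> S" using t unfolding R_def by auto
    have hm: "h \<in> Mor C" "cdom C h = e" "ccod C h = c" and WS: "W \<subseteq> IFr_map C h S"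
      using sa unfolding sd_arrow_def hom_def by auto
      from sk have W': "W' \<in> IFr C P e'" and km: "k \<in> Mor C" "cdom C k = e'" "ccod C k = e"
        and WW: "W' \<subseteq> IFr_map C k W" and e': "e' \<in> Ob C" unfolding sd_arrow_def hom_def by auto
      have hk: "comp C h k \<in> Mor C" "cdom C (comp C h k) = e'" "ccod C (comp C h k) = c"
        using comp_mor[OF hm(1) km(1)] hm km by auto
      have key: "(comp C (comp C h k) m, z) \<in> IFr_ex C h W \<and> (comp C (comp C h k) m, z) = (comp C h (comp C k m), z)"
        if mz: "(m, z) \<in> W'" for m z
      proof -
        have mm: "m \<in> Mor C" "ccod C m = e'" using IFr_elem[OF W' mz] by auto
        have eq: "comp C (comp C h k) m = comp C h (comp C k m)"
          using assoc[OF hm(1) km(1) mm(1)] km mm hm by auto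
        have "(comp C k m, z) \<in> W" using WW mz unfolding IFr_map_def by blast
        then show ?thesis unfolding IFr_ex_def eq by blast
      qed
      have sub: "IFr_ex C (comp C h k) W' \<subseteq> IFr_ex C h W"
        unfolding IFr_ex_def[of C "comp C h k"] using key by blast
      have "W' \<subseteq> IFr_map C (comp C h k) S"
      proof
        fix p assume p: "p \<in> W'"
        obtain m z where pe: "p = (m, z)" by (cases p) auto
        have "(comp C (comp C h k) m, z) \<in> S" using key[of m z] p pe exsub[OF sa] by auto
        then show "p \<in> IFr_map C (comp C h k) S" unfolding IFr_map_def pe by blast
      qed
      then have "sd_arrow C P e' W' (comp C h k) c S"
        unfolding sd_arrow_def hom_def using e' c W' S hk by auto
      then show ?thesis unfolding R_def using ex sub by blast
  qed
  have sv: "sieve C P c S R" unfolding sieve_def using A B by auto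
  have cv: "K_covers C S R" unfolding K_covers_def
  proof (rule equalityI)
    show "S \<subseteq> (\<Union>(d, U, f)\<in>R. IFr_ex C f U)"
    proof
      fix p assume pS: "p \<in> S"
      obtain f x where pe: "p = (f, x)" by (cases p) auto
      have fm: "f \<in> Mor C" "ccod C f = c" "x \<in> PC P (cdom C f)" using IFr_elem[OF S] pS pe by auto
      define d where "d = cdom C f"
      have d: "d \<in> Ob C" using dom_ob fm d_def by auto
      have eI: "eta C P d x \<in> IFr C P d" using eta_IFr d fm d_def by auto
      have etaS: "eta C P d x \<subseteq> IFr_map C f S"
      proof
        fix q assume q: "q \<in> eta C P d x"
        obtain g y where qe: "q = (g, y)" by (cases q) auto
        have "g \<in> Mor C" "ccod C g = d" "y \<in> PC P (cdom C g)" "ple P (cdom C g) y (Pmap P g x)"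
          using q qe unfolding eta_def by auto
        then have "(comp C f g, y) \<in> S" using IFr_down[OF S] pS pe d_def by auto
        then show "q \<in> IFr_map C f S" unfolding IFr_map_def qe by blast
      qed
      have fh: "f \<in> hom C d c" unfolding hom_def using fm d_def by auto
      have sa: "sd_arrow C P d (eta C P d x) f c S"
        unfolding sd_arrow_def using d c eI S fh etaS by auto
      have inR: "(d, eta C P d x, f) \<in> R" unfolding R_def using sa fh fm d_def exsub[OF sa] by blast
      have "(comp C f (idm C d), x) \<in> IFr_ex C f (eta C P d x)"
        unfolding IFr_ex_def using eta_self[OF d] fm d_def by blast
      then have "p \<in> IFr_ex C f (eta C P d x)" using id_r fm pe d_def by auto
      then show "p \<in> (\<Union>(d, U, f)\<in>R. IFr_ex C f U)" using inR by force
    qed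
  next
    show "(\<Union>(d, U, f)\<in>R. IFr_ex C f U) \<subseteq> S" using A exsub by blast
  qed
  obtain e W h where t: "(e, W, h) \<in> R" and gc: "K_covers C S (gen_sieve C P e W h)"
    using sc sv cv unfolding supercompact_def by blast
  have sa: "sd_arrow C P e W h c S" using A t by blast
  obtain d f x where fx: "f \<in> hom C d c" "x \<in> PC P d" "IFr_ex C h W \<subseteq> IFr_ex C f (eta C P d x)"
    "IFr_ex C f (eta C P d x) \<subseteq> S" using t unfolding R_def by blast
  have hm: "h \<in> Mor C" "cdom C h = e" "ccod C h = c"
    using sa unfolding sd_arrow_def hom_def by auto
  have "(\<Union>(d', U', f')\<in>gen_sieve C P e W h. IFr_ex C f' U') \<subseteq> IFr_ex C h W"
  proof
    fix p assume "p \<in> (\<Union>(d', U', f')\<in>gen_sieve C P e W h. IFr_ex C f' U')"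
    then obtain e' W' k where sk: "sd_arrow C P e' W' k e W" and pW: "p \<in> IFr_ex C (comp C h k) W'"
      unfolding gen_sieve_def by blast
    from sk have W': "W' \<in> IFr C P e'" and km: "k \<in> Mor C" "ccod C k = e" "cdom C k = e'"
      and WW: "W' \<subseteq> IFr_map C k W" unfolding sd_arrow_def hom_def by auto
    from pW obtain m z where p: "p = (comp C (comp C h k) m, z)" and mz: "(m, z) \<in> W'"
      unfolding IFr_ex_def by blast
    have mm: "m \<in> Mor C" "ccod C m = e'" using IFr_elem[OF W' mz] by auto
    have eq: "comp C (comp C h k) m = comp C h (comp C k m)"
      using assoc[OF hm(1) km(1) mm(1)] km mm hm by auto
    have "(comp C k m, z) \<in> W" using WW mz unfolding IFr_map_def by blast
    then show "p \<in> IFr_ex C h W" unfolding IFr_ex_def p eq by blast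
  qed
  then have "S \<subseteq> IFr_ex C h W" using gc unfolding K_covers_def by simp
  then have "S = IFr_ex C f (eta C P d x)" using fx by blast
  then show ?thesis using fx by blast
qed

theorem lemma7p6:
  fixes C :: "('o, 'm) cat" and P :: "('m, 'p, 'o) doctrine"
  assumes "primary_doctrine C P"
    and "c \<in> Ob C"
    and "S \<in> IFr C P c"
  shows "(\<exists>d f x. f \<in> hom C d c \<and> x \<in> PC P d \<and> S = IFr_ex C f (eta C P d x))
         \<longleftrightarrow> supercompact C P c S"
  using pd.forward[of C P c S] pd.backward[of C P c S] assms unfolding pd_def by blast

end
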